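(* $\mathbf{T}^{\nabla\bullet}$ is sound and strongly complete with respect to the class of reflexive frames: for every set $\Gamma\cup\{\phi\}\subseteq\mathcal{L}(\nabla,\bullet)$, $\Gamma\vdash_{\mathbf{T}^{\nabla\bullet}}\phi$ iff for every Kripke model $\mathcal{M}$ with reflexive accessibility relation and every state $s$, $\mathcal{M},s\vDash\Gamma$ implies $\mathcal{M},s\vDash\phi$.
   Context: $\mathcal{L}(\nabla,\bullet)$: $\phi::=p\mid\neg\phi\mid\phi\land\phi\mid\nabla\phi\mid\bullet\phi$ over a nonempty set $\mathbf{P}$ of propositional variables; $\Delta\phi:=\neg\nabla\phi$, $\circ\phi:=\neg\bullet\phi$. Kripke models $\langle S,R,V\rangle$: $s\vDash\nabla\phi$ iff there are $t,u$ with $sRt$, $sRu$, $t\vDash\phi$, $u\nvDash\phi$; $s\vDash\bullet\phi$ iff $s\vDash\phi$ and there is $t$ with $sRt$, $t\nvDash\phi$. The Hilbert system $\mathbf{K}^{\nabla\bullet}$ has axioms: A0 all propositional tautologies; A1 $\bullet\phi\to\phi$; A2 $\nabla\phi\leftrightarrow\nabla\neg\phi$; A3 $\bullet(\psi\to\phi)\land\phi\to\bullet\phi$; A4 $\nabla(\phi\land\psi)\to\nabla\phi\vee\nabla\psi$; A5 $\bullet(\phi\land\psi)\to\bullet\phi\vee\bullet\psi$; A6 $\nabla\phi\to\bullet\phi\vee\bullet\neg\phi$; A7 $\bullet(\phi\to\psi)\land\bullet(\neg\phi\to\chi)\to\nabla\phi$; rules R1 $\phi/\Delta\phi$; R2 $\phi/\circ\phi$;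 R3 $\phi\leftrightarrow\psi/\Delta\phi\leftrightarrow\Delta\psi$; R4 $\phi\leftrightarrow\psi/\circ\phi\leftrightarrow\circ\psi$; MP. $\mathbf{T}^{\nabla\bullet}$ is $\mathbf{K}^{\nabla\bullet}$ plus the axiom schema AT: $\Delta\phi\land\phi\to\circ(\psi\to\phi)$. $\Gamma\vdash\phi$ means $\vdash(\gamma_1\land\dots\land\gamma_n)\to\phi$ for some finite subset of $\Gamma$. *)

theory Defs
  imports Main
begin

datatype 'p fm =
    Atom 'p
  | Neg "'p fm"
  | Conj "'p fm" "'p fm"
  | Nabla "'p fm"
  | Bullet "'p fm"

definition Imp :: "'p fm \<Rightarrow> 'p fm \<Rightarrow> 'p fm" where
  "Imp a b = Neg (Conj a (Neg b))"

definition Disj :: "'p fm \<Rightarrow> 'p fm \<Rightarrow> 'p fm" where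
  "Disj a b = Neg (Conj (Neg a) (Neg b))"

definition Iff :: "'p fm \<Rightarrow> 'p fm \<Rightarrow> 'p fm" where
  "Iff a b = Conj (Imp a b) (Imp b a)"

definition Delta :: "'p fm \<Rightarrow> 'p fm" where
  "Delta a = Neg (Nabla a)"

definition Circ :: "'p fm \<Rightarrow> 'p fm" where
  "Circ a = Neg (Bullet a)"

fun peval :: "('p fm \<Rightarrow> bool) \<Rightarrow> 'p fm \<Rightarrow> bool" where
  "peval v (Atom p) = v (Atom p)"
| "peval v (Neg a) = (\<not> peval v a)"
| "peval v (Conj a b) = (peval v a \<and> peval v b)"
| "peval v (Nabla a) = v (Nabla a)"
| "peval v (Bullet a) = v (Bullet a)"

definition tautology :: "'p fm \<Rightarrow> bool" where
  "tautology a = (\<forall>v. peval v a)"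

inductive thmT :: "'p fm \<Rightarrow> bool" where
  A0: "tautology a \<Longrightarrow> thmT a"
| A1: "thmT (Imp (Bullet a) a)"
| A2: "thmT (Iff (Nabla a) (Nabla (Neg a)))"
| A3: "thmT (Imp (Conj (Bullet (Imp b a)) a) (Bullet a))"
| A4: "thmT (Imp (Nabla (Conj a b)) (Disj (Nabla a) (Nabla b)))"
| A5: "thmT (Imp (Bullet (Conj a b)) (Disj (Bullet a) (Bullet b)))"
| A6: "thmT (Imp (Nabla a) (Disj (Bullet a) (Bullet (Neg a))))"
| A7: "thmT (Imp (Conj (Bullet (Imp a b)) (Bullet (Imp (Neg a) c))) (Nabla a))"
| AT: "thmT (Imp (Conj (Delta a) a) (Circ (Imp b a)))"
| R1: "thmT a \<Longrightarrow> thmT (Delta a)"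
| R2: "thmT a \<Longrightarrow> thmT (Circ a)"
| R3: "thmT (Iff a b) \<Longrightarrow> thmT (Iff (Delta a) (Delta b))"
| R4: "thmT (Iff a b) \<Longrightarrow> thmT (Iff (Circ a) (Circ b))"
| MP: "thmT (Imp a b) \<Longrightarrow> thmT a \<Longrightarrow> thmT b"

fun Conjs :: "'p fm list \<Rightarrow> 'p fm" where
  "Conjs [] = undefined"
| "Conjs [a] = a"
| "Conjs (a # as) = Conj a (Conjs as)"

text \<open>Gamma |- phi: for some finite subset {g1..gn} of Gamma, |- (g1 & ... & gn) --> phi
  (for n = 0 this reads |- phi).\<close>
definition derivesT :: "'p fm set \<Rightarrow> 'p fm \<Rightarrow> bool" where
  "derivesT \<Gamma> a = (thmT a \<or> (\<exists>xs. xs \<noteq> [] \<and> set xs \<subseteq> \<Gamma> \<and> thmT (Imp (Conjs xs) a)))"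

text \<open>A Kripke model is given by a set of states W, an accessibility relation R and a
  valuation V; only R-successors inside W are considered.\<close>
fun sat :: "'s set \<Rightarrow> ('s \<Rightarrow> 's \<Rightarrow> bool) \<Rightarrow> ('p \<Rightarrow> 's set) \<Rightarrow> 's \<Rightarrow> 'p fm \<Rightarrow> bool" where
  "sat W R V s (Atom p) = (s \<in> V p)"
| "sat W R V s (Neg a) = (\<not> sat W R V s a)"
| "sat W R V s (Conj a b) = (sat W R V s a \<and> sat W R V s b)"
| "sat W R V s (Nabla a) =
     ((\<exists>t\<in>W. R s t \<and> sat W R V t a) \<and> (\<exists>u\<in>W. R s u \<and> \<not> sat W R V u a))"
| "sat W R V s (Bullet a) = (sat W R V s a \<and> (\<exists>t\<in>W. R s t \<and> \<not> sat W R V t a))"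

definition reflexive_frame :: "'s set \<Rightarrow> ('s \<Rightarrow> 's \<Rightarrow> bool) \<Rightarrow> bool" where
  "reflexive_frame W R = (\<forall>s\<in>W. R s s)"

definition refl_consequence :: "'s itself \<Rightarrow> 'p fm set \<Rightarrow> 'p fm \<Rightarrow> bool" where
  "refl_consequence _ \<Gamma> a =
     (\<forall>(W::'s set) R (V::'p \<Rightarrow> 's set). reflexive_frame W R \<longrightarrow>
        (\<forall>s\<in>W. (\<forall>g\<in>\<Gamma>. sat W R V s g) \<longrightarrow> sat W R V s a))"

end

theory Submission
  imports Defs
begin

lemmas fdefs = Imp_def Disj_def Iff_def Delta_def Circ_def

definition TT :: "'p fm" where "TT = Imp (Atom undefined) (Atom undefined)"
definition Bot :: "'p fm" where "Bot = Neg TT"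
definition Box :: "'p fm \<Rightarrow> 'p fm" where "Box a = Conj a (Delta a)"

lemma peval_TT[simp]: "peval v TT" by (simp add: TT_def Imp_def)
lemma peval_Bot[simp]: "\<not> peval v Bot" by (simp add: Bot_def)

fun cj :: "'p fm list \<Rightarrow> 'p fm" where
  "cj [] = TT" | "cj (x # xs) = Conj x (cj xs)"

lemma peval_cj: "peval v (cj xs) = (\<forall>x\<in>set xs. peval v x)"
  by (induction xs) auto

lemma peval_Conjs: "xs \<noteq> [] \<Longrightarrow> peval v (Conjs xs) = (\<forall>x\<in>set xs. peval v x)"
  by (induction xs rule: Conjs.induct) auto

lemma taut0: "(\<And>v. peval v r) \<Longrightarrow> thmT r"
  by (rule A0) (simp add: tautology_def)

lemma taut1: "thmT p \<Longrightarrow> (\<And>v. peval v p \<Longrightarrow> peval v q) \<Longrightarrow> thmT q"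
  by (rule MP[of p q]) (auto intro!: taut0 simp: Imp_def)

lemma taut2: "thmT p \<Longrightarrow> thmT q \<Longrightarrow> (\<And>v. peval v p \<Longrightarrow> peval v q \<Longrightarrow> peval v r) \<Longrightarrow> thmT r"
  by (rule MP[of q r], rule MP[of p "Imp q r"]) (auto intro!: taut0 simp: Imp_def)

lemma taut3: "thmT p \<Longrightarrow> thmT q \<Longrightarrow> thmT s \<Longrightarrow> (\<And>v. peval v p \<Longrightarrow> peval v q \<Longrightarrow> peval v s \<Longrightarrow> peval v r) \<Longrightarrow> thmT r"
  by (rule MP[of s r], rule MP[of q "Imp s r"], rule MP[of p "Imp q (Imp s r)"]) (auto intro!: taut0 simp: Imp_def)

lemma taut4: "thmT p \<Longrightarrow> thmT q \<Longrightarrow> thmT s \<Longrightarrow> thmT t \<Longrightarrow> (\<And>v. peval v p \<Longrightarrow> peval v q \<Longrightarrow> peval v s \<Longrightarrow> peval v t \<Longrightarrow> peval v r) \<Longrightarrow> thmT r"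
  by (rule MP[of t r], rule taut3[of p q s "Imp t r"]) (auto simp: Imp_def)

lemma bull_nab: "thmT (Imp (Bullet x) (Nabla x))"
proof -
  have "thmT (Iff (Imp TT x) x)" by (rule taut0) (simp add: fdefs)
  then have r: "thmT (Iff (Circ (Imp TT x)) (Circ x))" by (rule R4)
  show ?thesis
    by (rule taut3[OF r AT[of x TT] A1[of x]]) (simp add: fdefs; blast)
qed

lemma nab_bull: "thmT (Imp (Conj (Nabla x) x) (Bullet x))"
  by (rule taut2[OF A6[of x] A1[of "Neg x"]]) (simp add: fdefs; blast)

lemma box_conj: "thmT (Imp (Conj (Box a) (Box b)) (Box (Conj a b)))"
  by (rule taut1[OF A4[of a b]]) (simp add: fdefs Box_def; blast)

lemma box_mono: assumes "thmT (Imp a c)" shows "thmT (Imp (Box a) (Box c))"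
proof -
  have "thmT (Iff (Imp (Neg c) a) c)" by (rule taut1[OF assms]) (simp add: fdefs; blast)
  then have r: "thmT (Iff (Delta (Imp (Neg c) a)) (Delta c))" by (rule R3)
  have b: "thmT (Imp (Conj (Nabla (Imp (Neg c) a)) (Imp (Neg c) a)) (Bullet (Imp (Neg c) a)))"
    by (rule nab_bull)
  show ?thesis
    by (rule taut4[OF r AT[of a "Neg c"] b assms]) (simp add: fdefs Box_def; blast)
qed

lemma box_K: "thmT (Imp (Conj (Box (Imp x p)) (Box x)) (Box p))"
proof -
  have "thmT (Imp (Box (Conj (Imp x p) x)) (Box p))"
    by (rule box_mono, rule taut0) (simp add: fdefs)
  then show ?thesis by (rule taut2[OF box_conj[of "Imp x p" x]]) (simp add: fdefs Box_def; blast)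
qed

lemma box_nec: "thmT a \<Longrightarrow> thmT (Box a)"
  by (rule taut2[OF _ R1[of a]]) (auto simp: Box_def)

lemma box_list: "thmT (Imp (cj xs) p) \<Longrightarrow> thmT (Imp (cj (map Box xs)) (Box p))"
proof (induction xs arbitrary: p)
  case Nil
  then have "thmT p" by (rule taut1) (simp add: fdefs)
  then have "thmT (Box p)" by (rule box_nec)
  then show ?case by (rule taut1) (simp add: fdefs)
next
  case (Cons x xs)
  have "thmT (Imp (cj xs) (Imp x p))" using Cons.prems by (rule taut1) (simp add: fdefs)
  then have "thmT (Imp (cj (map Box xs)) (Box (Imp x p)))" by (rule Cons.IH)
  then show ?case by (rule taut2[OF _ box_K]) (simp add: fdefs; blast)
qed

section \<open>Derivability from sets\<close>

definition der :: "'p fm set \<Rightarrow> 'p fm \<Rightarrow> bool" where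
  "der S a = (\<exists>xs. set xs \<subseteq> S \<and> thmT (Imp (cj xs) a))"

lemma der_mem: "a \<in> S \<Longrightarrow> der S a"
  unfolding der_def by (rule exI[of _ "[a]"]) (auto intro!: taut0 simp: fdefs)

lemma der_thm: "thmT a \<Longrightarrow> der S a"
  unfolding der_def by (rule exI[of _ "[]"]) (auto elim!: taut1 simp: fdefs)

lemma der_mp: assumes "der S a" "der S b" "\<And>v. peval v a \<Longrightarrow> peval v b \<Longrightarrow> peval v c"
  shows "der S c"
proof -
  obtain xs ys where x: "set xs \<subseteq> S" "thmT (Imp (cj xs) a)" and y: "set ys \<subseteq> S" "thmT (Imp (cj ys) b)"
    using assms(1,2) unfolding der_def by blast
  have "thmT (Imp (cj (xs @ ys)) c)"
    by (rule taut2[OF x(2) y(2)]) (auto simp: fdefs peval_cj assms(3))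
  then show ?thesis using x y unfolding der_def by (intro exI[of _ "xs @ ys"]) auto
qed

lemma der_mp1: "der S a \<Longrightarrow> (\<And>v. peval v a \<Longrightarrow> peval v c) \<Longrightarrow> der S c"
  using der_mp[of S a a c] by blast

lemma der_ded: assumes "der (insert a S) b" shows "der S (Imp a b)"
proof -
  obtain xs where x: "set xs \<subseteq> insert a S" "thmT (Imp (cj xs) b)"
    using assms unfolding der_def by blast
  have "thmT (Imp (cj (filter (\<lambda>y. y \<noteq> a) xs)) (Imp a b))"
    by (rule taut1[OF x(2)]) (auto simp: fdefs peval_cj)
  then show ?thesis using x(1) unfolding der_def by (intro exI[of _ "filter (\<lambda>y. y \<noteq> a) xs"]) auto
qed

lemma der_subset: "der S a \<Longrightarrow> S \<subseteq> T \<Longrightarrow> der T a"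
  unfolding der_def by blast

definition consistent :: "'p fm set \<Rightarrow> bool" where
  "consistent S = (\<not> der S Bot)"

definition mcs :: "'p fm set \<Rightarrow> bool" where
  "mcs M = (consistent M \<and> (\<forall>a. a \<notin> M \<longrightarrow> \<not> consistent (insert a M)))"

lemma lindenbaum: assumes "consistent S" shows "\<exists>M. S \<subseteq> M \<and> mcs M"
proof -
  let ?A = "{T. S \<subseteq> T \<and> consistent T}"
  have "\<forall>C\<in>chains ?A. \<exists>U\<in>?A. \<forall>X\<in>C. X \<subseteq> U"
  proof
    fix C assume C: "C \<in> chains ?A"
    show "\<exists>U\<in>?A. \<forall>X\<in>C. X \<subseteq> U"
    proof (cases "C = {}")
      case True then show ?thesis using assms by auto
    next
      case False
      have "consistent (\<Union>C)" unfolding consistent_def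
      proof
        assume "der (\<Union>C) Bot"
        then obtain xs where xs: "set xs \<subseteq> \<Union>C" "thmT (Imp (cj xs) Bot)" unfolding der_def by blast
        have "subset.chain ?A C" using C by (simp add: chains_alt_def)
        then obtain B where "B \<in> C" "set xs \<subseteq> B"
          using finite_subset_Union_chain[of "set xs" C ?A] xs(1) False by auto
        then have "der B Bot" using xs(2) unfolding der_def by blast
        then show False using \<open>B \<in> C\<close> C unfolding chains_def consistent_def by auto
      qed
      moreover have "S \<subseteq> \<Union>C" using False C unfolding chains_def by auto
      ultimately show ?thesis by auto
    qed
  qed
  then obtain M where M: "M \<in> ?A" "\<forall>X\<in>?A. M \<subseteq> X \<longrightarrow> X = M"
    using Zorn_Lemma2[of ?A] by blast
  then have "mcs M" unfolding mcs_def by (metis (no_types, lifting) insertI1 mem_Collect_eq subset_insertI subset_insertI2)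
  then show ?thesis using M by auto
qed

lemma mcs_der: "mcs M \<Longrightarrow> der M a \<Longrightarrow> a \<in> M"
proof (rule ccontr)
  assume m: "mcs M" "der M a" "a \<notin> M"
  then have "der (insert a M) Bot" unfolding mcs_def consistent_def by auto
  then have "der M (Imp a Bot)" by (rule der_ded)
  then have "der M Bot" using m(2) by (rule der_mp) (auto simp: fdefs)
  then show False using m(1) unfolding mcs_def consistent_def by auto
qed

lemma mcs_neg: "mcs M \<Longrightarrow> (Neg a \<in> M) = (a \<notin> M)"
proof
  assume m: "mcs M" "Neg a \<in> M"
  show "a \<notin> M"
  proof
    assume "a \<in> M"
    then have "der M Bot" using m(2) by (rule der_mp[OF der_mem der_mem]) auto
    then show False using m(1) unfolding mcs_def consistent_def by auto
  qed
next
  assume m: "mcs M" "a \<notin> M"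
  then have "der (insert a M) Bot" unfolding mcs_def consistent_def by auto
  then have "der M (Imp a Bot)" by (rule der_ded)
  then have "der M (Neg a)" by (rule der_mp1) (auto simp: fdefs)
  then show "Neg a \<in> M" using m(1) by (rule_tac mcs_der)
qed

lemma mcs_conj: "mcs M \<Longrightarrow> (Conj a b \<in> M) = (a \<in> M \<and> b \<in> M)"
proof
  assume m: "mcs M" "Conj a b \<in> M"
  have "der M a" "der M b" using der_mem[OF m(2)] by (rule der_mp1; simp)+
  then show "a \<in> M \<and> b \<in> M" using m(1) by (simp add: mcs_der)
next
  assume m: "mcs M" "a \<in> M \<and> b \<in> M"
  have "der M (Conj a b)" using m(2) by (intro der_mp[OF der_mem[of a] der_mem[of b]]) auto
  then show "Conj a b \<in> M" using m(1) by (simp add: mcs_der)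
qed

lemma mcs_thm: "mcs M \<Longrightarrow> thmT a \<Longrightarrow> a \<in> M"
  by (simp add: der_thm mcs_der)

lemma mcs_imp: "mcs M \<Longrightarrow> thmT (Imp a b) \<Longrightarrow> a \<in> M \<Longrightarrow> b \<in> M"
proof -
  assume m: "mcs M" "thmT (Imp a b)" "a \<in> M"
  have "der M b" using m(2,3) by (intro der_mp[OF der_thm[of "Imp a b"] der_mem[of a]]) (auto simp: fdefs)
  then show ?thesis using m(1) by (simp add: mcs_der)
qed

section \<open>Canonical model\<close>

definition CW :: "'p fm set set" where "CW = {M. mcs M}"
definition CR :: "'p fm set \<Rightarrow> 'p fm set \<Rightarrow> bool" where "CR M N = (\<forall>a. Box a \<in> M \<longrightarrow> a \<in> N)"
definition CV :: "'p \<Rightarrow> 'p fm set set" where "CV p = {M. Atom p \<in> M}"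

lemma box_exist: assumes m: "mcs M" and nb: "Box p \<notin> M"
  shows "\<exists>N. mcs N \<and> CR M N \<and> p \<notin> N"
proof -
  let ?B = "{a. Box a \<in> M}"
  have "consistent (insert (Neg p) ?B)" unfolding consistent_def
  proof
    assume "der (insert (Neg p) ?B) Bot"
    then have "der ?B (Imp (Neg p) Bot)" by (rule der_ded)
    then have "der ?B p" by (rule der_mp1) (auto simp: fdefs)
    then obtain xs where xs: "set xs \<subseteq> ?B" "thmT (Imp (cj xs) p)" unfolding der_def by blast
    have "thmT (Imp (cj (map Box xs)) (Box p))" using xs(2) by (rule box_list)
    moreover have "set (map Box xs) \<subseteq> M" using xs(1) by auto
    ultimately have "der M (Box p)" unfolding der_def by blast
    then show False using m nb mcs_der by blast
  qed
  then obtain N where N: "insert (Neg p) ?B \<subseteq> N" "mcs N" using lindenbaum by blast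
  then have "p \<notin> N" using mcs_neg by blast
  moreover have "CR M N" using N unfolding CR_def by auto
  ultimately show ?thesis using N by blast
qed

lemma box_iff: "mcs M \<Longrightarrow> (Box p \<in> M) = (\<forall>N. mcs N \<and> CR M N \<longrightarrow> p \<in> N)"
  using box_exist unfolding CR_def by blast

lemma box_mem: "mcs M \<Longrightarrow> (Box a \<in> M) = (a \<in> M \<and> Nabla a \<notin> M)"
  by (simp add: Box_def Delta_def mcs_conj mcs_neg)

lemma nab_neg: "mcs M \<Longrightarrow> (Nabla (Neg a) \<in> M) = (Nabla a \<in> M)"
proof -
  assume m: "mcs M"
  have "thmT (Imp (Nabla a) (Nabla (Neg a)))" "thmT (Imp (Nabla (Neg a)) (Nabla a))"
    by (rule taut1[OF A2[of a]]; simp add: fdefs)+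
  then show ?thesis using mcs_imp[OF m] by blast
qed

lemma bull_mem: "mcs M \<Longrightarrow> (Bullet a \<in> M) = (a \<in> M \<and> Nabla a \<in> M)"
proof -
  assume m: "mcs M"
  show ?thesis
  proof
    assume b: "Bullet a \<in> M"
    show "a \<in> M \<and> Nabla a \<in> M" using mcs_imp[OF m A1 b] mcs_imp[OF m bull_nab b] by blast
  next
    assume "a \<in> M \<and> Nabla a \<in> M"
    then have "Conj (Nabla a) a \<in> M" using mcs_conj[OF m] by blast
    then show "Bullet a \<in> M" using mcs_imp[OF m nab_bull] by blast
  qed
qed

lemma truth: "mcs M \<Longrightarrow> sat CW CR CV M f = (f \<in> M)"
proof (induction f arbitrary: M)
  case (Atom x) then show ?case by (simp add: CV_def)
next
  case (Neg f) then show ?case by (simp add: mcs_neg)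
next
  case (Conj f1 f2) then show ?case by (simp add: mcs_conj)
next
  case (Nabla f)
  have "sat CW CR CV M (Nabla f) = ((\<exists>N. mcs N \<and> CR M N \<and> f \<in> N) \<and> (\<exists>N. mcs N \<and> CR M N \<and> f \<notin> N))"
    using Nabla.IH by (auto simp: CW_def)
  also have "\<dots> = (Box (Neg f) \<notin> M \<and> Box f \<notin> M)"
    using box_iff[OF Nabla.prems, of f] box_iff[OF Nabla.prems, of "Neg f"] mcs_neg by blast
  also have "\<dots> = (Nabla f \<in> M)"
    using box_mem[OF Nabla.prems] nab_neg[OF Nabla.prems] mcs_neg[OF Nabla.prems] by blast
  finally show ?case .
next
  case (Bullet f)
  have "sat CW CR CV M (Bullet f) = (f \<in> M \<and> (\<exists>N. mcs N \<and> CR M N \<and> f \<notin> N))"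
    using Bullet by (auto simp: CW_def)
  also have "\<dots> = (f \<in> M \<and> Box f \<notin> M)"
    using box_iff[OF Bullet.prems, of f] by blast
  also have "\<dots> = (Bullet f \<in> M)"
    using box_mem[OF Bullet.prems] bull_mem[OF Bullet.prems] by blast
  finally show ?case .
qed

lemma canon_refl: "reflexive_frame CW CR"
  unfolding reflexive_frame_def CW_def CR_def using box_mem by blast

section \<open>Soundness\<close>

lemma peval_sat: "peval (\<lambda>f. sat W R V s f) a = sat W R V s a"
  by (induction a) auto

lemma soundness: "thmT a \<Longrightarrow> reflexive_frame W R \<Longrightarrow> s \<in> W \<Longrightarrow> sat W R V s a"
proof (induction a arbitrary: s rule: thmT.induct)
  case (A0 a)
  then show ?case using peval_sat[of W R V s a] unfolding tautology_def by metis
next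
  case (A1 a) then show ?case by (simp add: fdefs)
next
  case (A2 a) then show ?case by (simp add: fdefs) blast
next
  case (A3 b a) then show ?case by (simp add: fdefs) blast
next
  case (A4 a b) then show ?case by (simp add: fdefs) blast
next
  case (A5 a b) then show ?case by (simp add: fdefs) blast
next
  case (A6 a) then show ?case by (simp add: fdefs) blast
next
  case (A7 a b c) then show ?case by (simp add: fdefs) blast
next
  case (AT a b) then show ?case unfolding reflexive_frame_def by (simp add: fdefs) blast
next
  case (R1 a) then show ?case by (simp add: fdefs)
next
  case (R2 a) then show ?case by (simp add: fdefs)
next
  case (R3 a b)
  have eq: "sat W R V t a = sat W R V t b" if "t \<in> W" for t
    using R3.IH[OF R3.prems(1) that] by (simp add: fdefs) blast
  show ?case using eq[OF R3.prems(2)] by (simp add: fdefs eq cong: rev_conj_cong)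
next
  case (R4 a b)
  have eq: "sat W R V t a = sat W R V t b" if "t \<in> W" for t
    using R4.IH[OF R4.prems(1) that] by (simp add: fdefs) blast
  show ?case using eq[OF R4.prems(2)] by (simp add: fdefs eq cong: rev_conj_cong)
next
  case (MP a b) then show ?case by (simp add: fdefs)
qed

lemma sat_Conjs: "xs \<noteq> [] \<Longrightarrow> sat W R V s (Conjs xs) = (\<forall>x\<in>set xs. sat W R V s x)"
  by (induction xs rule: Conjs.induct) auto

lemma sound_der: "derivesT \<Gamma> \<phi> \<Longrightarrow> refl_consequence TYPE('s) \<Gamma> \<phi>"
  unfolding refl_consequence_def
proof (intro allI impI ballI)
  fix W :: "'s set" and R V s
  assume d: "derivesT \<Gamma> \<phi>" and r: "reflexive_frame W R" "s \<in> W" "\<forall>g\<in>\<Gamma>. sat W R V s g"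
  show "sat W R V s \<phi>"
  proof (cases "thmT \<phi>")
    case True
    show ?thesis by (rule soundness[OF True r(1,2)])
  next
    case False
    then obtain xs where xs: "xs \<noteq> []" "set xs \<subseteq> \<Gamma>" "thmT (Imp (Conjs xs) \<phi>)"
      using d False by (auto simp: derivesT_def)
    have "sat W R V s (Imp (Conjs xs) \<phi>)" by (rule soundness[OF xs(3) r(1,2)])
    moreover have "sat W R V s (Conjs xs)" unfolding sat_Conjs[OF xs(1)] using xs(2) r(3) by (auto simp del: sat.simps)
    ultimately show "sat W R V s \<phi>" by (simp add: Imp_def)
  qed
qed

lemma complete: fixes \<Gamma> :: "'p fm set" assumes "refl_consequence TYPE('p fm set) \<Gamma> \<phi>" shows "derivesT \<Gamma> \<phi>"
proof (rule ccontr)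
  assume nd: "\<not> derivesT \<Gamma> \<phi>"
  have "consistent (insert (Neg \<phi>) \<Gamma>)" unfolding consistent_def
  proof
    assume "der (insert (Neg \<phi>) \<Gamma>) Bot"
    then have "der \<Gamma> (Imp (Neg \<phi>) Bot)" by (rule der_ded)
    then have "der \<Gamma> \<phi>" by (rule der_mp1) (auto simp: fdefs)
    then obtain xs where xs: "set xs \<subseteq> \<Gamma>" "thmT (Imp (cj xs) \<phi>)" unfolding der_def by blast
    show False
    proof (cases "xs = []")
      case True
      then have "thmT \<phi>" using xs(2) by (auto elim!: taut1 simp: fdefs)
      then show False using nd by (simp add: derivesT_def)
    next
      case False
      have "thmT (Imp (Conjs xs) \<phi>)" using xs(2) by (rule taut1) (simp add: fdefs peval_cj peval_Conjs[OF False])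
      then show False using nd xs(1) False unfolding derivesT_def by (simp del: sat.simps; blast)
    qed
  qed
  then obtain M where M: "insert (Neg \<phi>) \<Gamma> \<subseteq> M" "mcs M" using lindenbaum by blast
  have all: "\<forall>s\<in>CW. (\<forall>g\<in>\<Gamma>. sat CW CR CV s g) \<longrightarrow> sat CW CR CV s \<phi>"
    using mp[OF assms[unfolded refl_consequence_def, THEN spec[of _ CW], THEN spec[of _ CR], THEN spec[of _ CV]] canon_refl] .
  have g: "\<forall>g\<in>\<Gamma>. sat CW CR CV M g"
  proof
    fix g assume "g \<in> \<Gamma>"
    then have "g \<in> M" using M(1) by blast
    then show "sat CW CR CV M g" using truth[OF M(2)] by simp
  qed
  have "M \<in> CW" using M(2) by (simp add: CW_def)
  then have "sat CW CR CV M \<phi>" using all g by (simp del: sat.simps)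
  then have "\<phi> \<in> M" using truth[OF M(2)] by simp
  moreover have "Neg \<phi> \<in> M" using M(1) by blast
  ultimately show False using mcs_neg[OF M(2)] by simp
qed

theorem theorem4:
  fixes \<Gamma> :: "'p fm set" and \<phi> :: "'p fm"
  shows "(derivesT \<Gamma> \<phi> \<longrightarrow> refl_consequence TYPE('s) \<Gamma> \<phi>)
       \<and> (derivesT \<Gamma> \<phi> \<longleftrightarrow> refl_consequence TYPE('p fm set) \<Gamma> \<phi>)"
proof (intro conjI impI iffI)
  show "refl_consequence TYPE('s) \<Gamma> \<phi>" if "derivesT \<Gamma> \<phi>" using that by (rule sound_der)
  show "refl_consequence TYPE('p fm set) \<Gamma> \<phi>" if "derivesT \<Gamma> \<phi>" using that by (rule sound_der)
  show "derivesT \<Gamma> \<phi>" if "refl_consequence TYPE('p fm set) \<Gamma> \<phi>" using that by (rule complete)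
qed

end
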